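(* Let $q$ be a prime power, $V$ an $n$-dimensional $\mathbb{F}_q$-vector space and $k\ge1$. The simplicial complex $\Delta(V^*,k)$ is a matroid complex.
   Context: Let $\mathcal{L}$ be the set of lines (1-dimensional subspaces) of $V^*$. $\Delta(V^*,k)$ is the simplicial complex on the vertex set $\mathcal{L}\sqcup\cdots\sqcup\mathcal{L}$ ($k$ disjoint copies) whose faces are the sets $(\mathcal{L}\setminus F_1)\sqcup\cdots\sqcup(\mathcal{L}\setminus F_k)$ with $F_1,\dots,F_k\subseteq\mathcal{L}$ such that $F_1\cup\cdots\cup F_k$ linearly spans $V^*$. A matroid complex is a simplicial complex satisfying the exchange property: if $F,G$ are faces with $|F|<|G|$, there is $v\in G\setminus F$ with $F\cup\{v\}$ a face. *)

theory Defs
  imports "HOL-Analysis.Analysis"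
begin

text \<open>The dual space V* of an n-dimensional F_q-space is modelled (via the canonical
identification V* = F_q^n) as the coordinate space 'a^'n with 'a a finite field.\<close>

definition lines :: "('a::{finite,field} ^ 'n) set set" where
  "lines = {L. vec.subspace L \<and> vec.dim L = 1}"

definition Delta_vertices :: "nat \<Rightarrow> (('a::{finite,field} ^ 'n) set \<times> nat) set" where
  "Delta_vertices k = lines \<times> {..<k}"

definition Delta_faces :: "nat \<Rightarrow> (('a::{finite,field} ^ 'n) set \<times> nat) set set" where
  "Delta_faces k =
     {{(L, i). L \<in> lines \<and> i < k \<and> L \<notin> F i} | F.
        (\<forall>i<k. F i \<subseteq> lines) \<and>
        vec.span (\<Union> (\<Union>i<k. F i)) = (UNIV :: ('a ^ 'n) set)}"

definition simplicial_complex :: "'v set \<Rightarrow> 'v set set \<Rightarrow> bool" where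
  "simplicial_complex X \<Delta> \<longleftrightarrow>
     \<Delta> \<noteq> {} \<and> (\<forall>F\<in>\<Delta>. F \<subseteq> X) \<and> (\<forall>F\<in>\<Delta>. \<forall>G. G \<subseteq> F \<longrightarrow> G \<in> \<Delta>)"

definition matroid_complex :: "'v set \<Rightarrow> 'v set set \<Rightarrow> bool" where
  "matroid_complex X \<Delta> \<longleftrightarrow> simplicial_complex X \<Delta> \<and>
     (\<forall>F\<in>\<Delta>. \<forall>G\<in>\<Delta>. card F < card G \<longrightarrow> (\<exists>v\<in>G - F. insert v F \<in> \<Delta>))"

end

theory Submission
  imports Defs
begin

lemma line_gen:
  assumes "(L :: ('a::{finite,field} ^ 'n) set) \<in> lines"
  shows "\<exists>x\<in>L. L \<subseteq> vec.span {x}"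
proof -
  from assms have d: "vec.dim L = 1" by (simp add: lines_def)
  obtain B where B: "B \<subseteq> L" "vec.independent B" "L \<subseteq> vec.span B" "card B = vec.dim L"
    using vec.basis_exists by blast
  then have "card B = 1" using d by simp
  then obtain x where "B = {x}" using card_1_singletonE by blast
  then show ?thesis using B by auto
qed

lemma line_span:
  assumes "L \<in> lines" "x \<in> L" "L \<subseteq> vec.span {x}"
  shows "vec.span (L \<union> X) = vec.span (insert x X)"
  unfolding vec.span_eq
proof
  show "L \<union> X \<subseteq> vec.span (insert x X)"
    using assms(3) vec.span_mono[of "{x}" "insert x X"] vec.span_superset[of "insert x X"] by blast
  show "insert x X \<subseteq> vec.span (L \<union> X)"
    using assms(2) vec.span_superset[of "L \<union> X"] by blast
qed

lemma faces_char:
  "G \<in> (Delta_faces k :: (('a::{finite,field} ^ 'n) set \<times> nat) set set) \<longleftrightarrow>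
    G \<subseteq> Delta_vertices k \<and> vec.span (\<Union> (fst ` (Delta_vertices k - G))) = UNIV"
proof
  assume "G \<in> Delta_faces k"
  then obtain F where F: "G = {(L, i). L \<in> lines \<and> i < k \<and> L \<notin> F i}"
    "\<forall>i<k. F i \<subseteq> lines" "vec.span (\<Union> (\<Union>i<k. F i)) = (UNIV :: ('a ^ 'n) set)"
    unfolding Delta_faces_def by blast
  have "\<Union> (fst ` (Delta_vertices k - G)) = \<Union> (\<Union>i<k. F i)"
    using F(2) unfolding F(1) Delta_vertices_def by force
  then show "G \<subseteq> Delta_vertices k \<and> vec.span (\<Union> (fst ` (Delta_vertices k - G))) = UNIV"
    using F unfolding Delta_vertices_def by auto
next
  assume a: "G \<subseteq> Delta_vertices k \<and> vec.span (\<Union> (fst ` (Delta_vertices k - G))) = UNIV"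
  define F where "F i = {L \<in> lines. (L, i) \<notin> G}" for i
  have "G = {(L, i). L \<in> lines \<and> i < k \<and> L \<notin> F i}"
    using a unfolding F_def Delta_vertices_def by auto
  moreover have "\<Union> (fst ` (Delta_vertices k - G)) = \<Union> (\<Union>i<k. F i)"
    unfolding F_def Delta_vertices_def by force
  moreover have "\<forall>i<k. F i \<subseteq> lines" unfolding F_def by auto
  ultimately show "G \<in> Delta_faces k"
    unfolding Delta_faces_def using a by (intro CollectI exI[of _ F]) simp
qed

lemma dim_add_le:
  fixes T D :: "(('a::{finite,field} ^ 'n) set \<times> nat) set"
  assumes "finite D" "fst ` D \<subseteq> lines"
  shows "vec.dim (\<Union> (fst ` (T \<union> D))) \<le> vec.dim (\<Union> (fst ` T)) + card D"
  using assms
proof (induction D rule: finite_induct)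
  case empty then show ?case by simp
next
  case (insert c D)
  let ?X = "\<Union> (fst ` (T \<union> D))"
  have L: "fst c \<in> lines" using insert by auto
  then obtain x where x: "x \<in> fst c" "fst c \<subseteq> vec.span {x}" using line_gen by blast
  have eq: "\<Union> (fst ` (T \<union> insert c D)) = fst c \<union> ?X" by auto
  have "vec.dim (fst c \<union> ?X) = vec.dim (vec.span (fst c \<union> ?X))" by simp
  also have "\<dots> = vec.dim (vec.span (insert x ?X))" using line_span[OF L x] by simp
  also have "\<dots> = vec.dim (insert x ?X)" by simp
  also have "\<dots> \<le> vec.dim ?X + 1" by (simp add: vec.dim_insert)
  finally show ?case using insert eq by simp
qed

lemma dim_add_eq:
  fixes T D S :: "(('a::{finite,field} ^ 'n) set \<times> nat) set"
  assumes "finite D" "fst ` D \<subseteq> lines" "T \<union> D \<subseteq> S" "D \<inter> T = {}"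
    "\<forall>c\<in>D. \<not> fst c \<subseteq> vec.span (\<Union> (fst ` (S - {c})))"
  shows "vec.dim (\<Union> (fst ` (T \<union> D))) = vec.dim (\<Union> (fst ` T)) + card D"
  using assms
proof (induction D rule: finite_induct)
  case empty then show ?case by simp
next
  case (insert c D)
  let ?X = "\<Union> (fst ` (T \<union> D))"
  have L: "fst c \<in> lines" using insert by auto
  then obtain x where x: "x \<in> fst c" "fst c \<subseteq> vec.span {x}" using line_gen by blast
  have eq: "\<Union> (fst ` (T \<union> insert c D)) = fst c \<union> ?X" by auto
  have sub: "T \<union> D \<subseteq> S - {c}" using insert by auto
  have nx: "x \<notin> vec.span ?X"
  proof
    assume "x \<in> vec.span ?X"
    then have "vec.span {x} \<subseteq> vec.span ?X"
      by (simp add: vec.span_minimal vec.subspace_span)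
    also have "\<dots> \<subseteq> vec.span (\<Union> (fst ` (S - {c})))"
      using sub by (intro vec.span_mono) auto
    finally show False using x insert.prems(4) by auto
  qed
  have IH: "vec.dim ?X = vec.dim (\<Union> (fst ` T)) + card D" using insert by auto
  have "vec.dim (fst c \<union> ?X) = vec.dim (vec.span (fst c \<union> ?X))" by simp
  also have "\<dots> = vec.dim (vec.span (insert x ?X))" using line_span[OF L x] by simp
  also have "\<dots> = vec.dim (insert x ?X)" by simp
  also have "\<dots> = vec.dim ?X + 1" using nx by (simp add: vec.dim_insert)
  finally show ?case using insert IH eq by simp
qed

lemma union_lines: "vec.span (\<Union> (lines :: ('a::{finite,field} ^ 'n) set set)) = UNIV"
proof -
  have "v \<in> vec.span (\<Union> lines)" for v :: "'a ^ 'n"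
  proof (cases "v = 0")
    case True then show ?thesis by (simp add: vec.span_zero)
  next
    case False
    have "vec.independent {v}" using False by (simp add: vec.independent_insert)
    then have "vec.dim {v} = 1" by (simp add: vec.dim_eq_card_independent)
    then have "vec.span {v} \<in> lines" unfolding lines_def by (simp add: vec.subspace_span)
    moreover have "v \<in> vec.span {v}" by (simp add: vec.span_base)
    ultimately show ?thesis by (meson UnionI vec.span_base)
  qed
  then show ?thesis by auto
qed

theorem lemma3p2:
  fixes k :: nat
  assumes "k \<ge> 1"
  shows "matroid_complex (Delta_vertices k :: (('a::{finite,field} ^ 'n) set \<times> nat) set)
           (Delta_faces k)"
proof -
  let ?E = "Delta_vertices k :: (('a::{finite,field} ^ 'n) set \<times> nat) set"
  let ?U = "\<lambda>S :: (('a ^ 'n) set \<times> nat) set. \<Union> (fst ` S)"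
  have finE: "finite ?E" unfolding Delta_vertices_def by simp
  have fstE: "fst ` ?E = lines"
  proof -
    have "0 < k" using assms by simp
    show ?thesis
    proof
      show "fst ` ?E \<subseteq> lines" unfolding Delta_vertices_def by auto
      show "lines \<subseteq> fst ` ?E"
      proof
        fix L :: "('a ^ 'n) set" assume "L \<in> lines"
        then have "(L, 0) \<in> ?E" using \<open>0 < k\<close> unfolding Delta_vertices_def by simp
        then show "L \<in> fst ` ?E" by (metis fst_conv image_eqI)
      qed
    qed
  qed
  have fstsub: "fst ` S \<subseteq> lines" if "S \<subseteq> ?E" for S using that fstE by blast
  have empty: "{} \<in> (Delta_faces k :: (('a ^ 'n) set \<times> nat) set set)"
    unfolding faces_char using fstE union_lines by simp
  have down: "G \<in> (Delta_faces k :: (('a ^ 'n) set \<times> nat) set set)"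
    if "F \<in> Delta_faces k" "G \<subseteq> F" for F G
  proof -
    have "vec.span (?U (?E - F)) \<subseteq> vec.span (?U (?E - G))"
      using that(2) by (intro vec.span_mono) auto
    then show ?thesis using that unfolding faces_char by auto
  qed
  have exch: "\<exists>v\<in>B - A. insert v A \<in> Delta_faces k"
    if A: "A \<in> Delta_faces k" and B: "B \<in> Delta_faces k" and lt: "card A < card B"
    for A B :: "(('a ^ 'n) set \<times> nat) set"
  proof (rule ccontr)
    assume no: "\<not> ?thesis"
    have AE: "A \<subseteq> ?E" and spA: "vec.span (?U (?E - A)) = UNIV"
      using A unfolding faces_char by auto
    have BE: "B \<subseteq> ?E" and spB: "vec.span (?U (?E - B)) = UNIV"
      using B unfolding faces_char by auto
    have finA: "finite A" and finB: "finite B" using AE BE finE finite_subset by auto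
    define T where "T = (?E - A) - B"
    define C where "C = B - A"
    have coloop: "\<forall>c\<in>C. \<not> fst c \<subseteq> vec.span (?U ((?E - A) - {c}))"
    proof
      fix c assume c: "c \<in> C"
      show "\<not> fst c \<subseteq> vec.span (?U ((?E - A) - {c}))"
      proof
        assume h: "fst c \<subseteq> vec.span (?U ((?E - A) - {c}))"
        have cE: "c \<in> ?E - A" using c BE C_def by auto
        have "?U (?E - A) \<subseteq> vec.span (?U ((?E - A) - {c}))"
        proof
          fix y assume "y \<in> ?U (?E - A)"
          then obtain d where d: "d \<in> ?E - A" "y \<in> fst d" by auto
          show "y \<in> vec.span (?U ((?E - A) - {c}))"
          proof (cases "d = c")
            case True then show ?thesis using h d by auto
          next
            case False then show ?thesis using d by (intro vec.span_base) auto
          qed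
        qed
        then have "vec.span (?U (?E - A)) \<subseteq> vec.span (?U ((?E - A) - {c}))"
          by (simp add: vec.span_minimal vec.subspace_span)
        then have "vec.span (?U ((?E - A) - {c})) = UNIV" using spA by auto
        moreover have "insert c A \<subseteq> ?E" using cE AE by auto
        moreover have "?E - insert c A = (?E - A) - {c}" by auto
        ultimately have "insert c A \<in> Delta_faces k" unfolding faces_char by simp
        then show False using no c C_def by auto
      qed
    qed
    have finC: "finite C" using finB C_def by auto
    have e1: "vec.dim (?U (T \<union> C)) = vec.dim (?U T) + card C"
      by (rule dim_add_eq[OF finC _ _ _ coloop]) (use BE fstsub in \<open>auto simp: C_def T_def\<close>)
    have TC: "T \<union> C = ?E - A" using BE unfolding T_def C_def by auto
    have dimU: "vec.dim (UNIV :: ('a ^ 'n) set) = vec.dim (?U (?E - A))"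
      using vec.dim_span[of "?U (?E - A)"] spA by simp
    have finAB: "finite (A - B)" using finA by auto
    have e2: "vec.dim (?U (T \<union> (A - B))) \<le> vec.dim (?U T) + card (A - B)"
      by (rule dim_add_le[OF finAB]) (use AE fstsub in auto)
    have "?E - B \<subseteq> T \<union> (A - B)" unfolding T_def by auto
    then have "vec.span (?U (?E - B)) \<subseteq> vec.span (?U (T \<union> (A - B)))"
      by (intro vec.span_mono) auto
    then have "vec.span (?U (T \<union> (A - B))) = UNIV" using spB by auto
    then have e3: "vec.dim (UNIV :: ('a ^ 'n) set) = vec.dim (?U (T \<union> (A - B)))"
      using vec.dim_span[of "?U (T \<union> (A - B))"] by simp
    have "card (A - B) = card A - card (A \<inter> B)"
      using finA by (simp add: card_Diff_subset_Int)
    moreover have "card (B - A) = card B - card (A \<inter> B)"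
      using finB by (simp add: card_Diff_subset_Int Int_commute)
    moreover have "card (A \<inter> B) \<le> card A" using finA by (simp add: card_mono)
    ultimately have "card (A - B) < card C" using lt C_def by simp
    then show False using e1 e2 e3 dimU TC by simp
  qed
  have sc: "simplicial_complex ?E (Delta_faces k)"
    unfolding simplicial_complex_def
    using empty down faces_char[where 'a='a and 'n='n and k=k] by blast
  have ex: "\<forall>F\<in>Delta_faces k. \<forall>G\<in>Delta_faces k. card F < card G \<longrightarrow>
      (\<exists>v\<in>G - F. insert v F \<in> (Delta_faces k :: (('a ^ 'n) set \<times> nat) set set))"
    using exch by blast
  show ?thesis unfolding matroid_complex_def using sc ex by blast
qed

end
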